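(* Let $q\ge 4$ be a prime power and $\rho(q)=\min\{\rho_q(u,v): u,v\in\mathcal{D}_q\}$. Then $\rho(q)=0$ if $3$ divides $q-1$, and $\rho(q)=2$ otherwise.
   Context: $\mathbb{F}_q$ is the finite field with $q$ elements. Hamming distance $d(u,v)=|\{i:u_i\ne v_i\}|$ on $\mathbb{F}_q^3$; $B(u)=\{v: d(u,v)\le 1\}$; $E(u)=\bigcup_{\lambda\in\mathbb{F}_q}B(\lambda u)$. $\mathcal{D}_q=\{(u_1,u_2,u_3)\in\mathbb{F}_q^3: u_1,u_2,u_3 \text{ pairwise distinct and nonzero}\}$, $\widetilde{B}(u)=B(u)\cap\mathcal{D}_q$, $\widetilde{E}(u)=E(u)\cap\mathcal{D}_q$. For $u,v\in\mathbb{F}_q^3$, $\rho_q(u,v)=0$ if $|\widetilde{E}(u)|=0$ or $|\widetilde{E}(v)|=0$, and otherwise $\rho_q(u,v)=\sum_{\mu\in\mathbb{F}_q^*}|\widetilde{B}(u)\cap\widetilde{B}(\mu v)|$. *)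

theory Defs
  imports Main
begin

text \<open>Vectors of F_q^3 are represented as triples; the field F_q is a type of
class field and finite, with q = CARD('a).\<close>

type_synonym 'a vec3 = "'a \<times> 'a \<times> 'a"

definition hdist :: "'a vec3 \<Rightarrow> 'a vec3 \<Rightarrow> nat" where
  "hdist u v = (case u of (u1, u2, u3) \<Rightarrow> case v of (v1, v2, v3) \<Rightarrow>
     (if u1 \<noteq> v1 then 1 else 0) + (if u2 \<noteq> v2 then 1 else 0) + (if u3 \<noteq> v3 then 1 else 0))"

definition smul3 :: "'a::times \<Rightarrow> 'a vec3 \<Rightarrow> 'a vec3" where
  "smul3 c u = (case u of (u1, u2, u3) \<Rightarrow> (c * u1, c * u2, c * u3))"

definition ball1 :: "'a vec3 \<Rightarrow> 'a vec3 set" where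
  "ball1 u = {v. hdist u v \<le> 1}"

definition Eset :: "('a::times) vec3 \<Rightarrow> 'a vec3 set" where
  "Eset u = (\<Union>c\<in>UNIV. ball1 (smul3 c u))"

definition Dset :: "('a::zero) vec3 set" where
  "Dset = {(u1, u2, u3). u1 \<noteq> u2 \<and> u1 \<noteq> u3 \<and> u2 \<noteq> u3 \<and> u1 \<noteq> 0 \<and> u2 \<noteq> 0 \<and> u3 \<noteq> 0}"

definition Btilde :: "('a::zero) vec3 \<Rightarrow> 'a vec3 set" where
  "Btilde u = ball1 u \<inter> Dset"

definition Etilde :: "('a::{times,zero}) vec3 \<Rightarrow> 'a vec3 set" where
  "Etilde u = Eset u \<inter> Dset"

definition rho_q :: "('a::{field,finite}) vec3 \<Rightarrow> 'a vec3 \<Rightarrow> nat" where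
  "rho_q u v = (if card (Etilde u) = 0 \<or> card (Etilde v) = 0 then 0
     else (\<Sum>\<mu>\<in>UNIV - {0}. card (Btilde u \<inter> Btilde (smul3 \<mu> v))))"

definition rho :: "('a::{field,finite}) itself \<Rightarrow> nat" where
  "rho _ = Min {rho_q u v | u v :: 'a vec3. u \<in> Dset \<and> v \<in> Dset}"

end

theory Submission
  imports Defs "HOL-Computational_Algebra.Polynomial"
begin

lemma smul3_simp[simp]: "smul3 m (x,y,z) = (m*x, m*y, m*z)" by (simp add: smul3_def)

lemma Dset_iff[simp]: "(a,b,c) \<in> Dset \<longleftrightarrow> a \<noteq> b \<and> a \<noteq> c \<and> b \<noteq> c \<and> a \<noteq> 0 \<and> b \<noteq> 0 \<and> c \<noteq> 0"
  by (simp add: Dset_def)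

lemma hdist_simp[simp]: "hdist (a,b,c) (x,y,z) = (if a \<noteq> x then 1 else 0) + (if b \<noteq> y then 1 else 0) + (if c \<noteq> z then 1 else 0)"
  by (simp add: hdist_def)

lemma Btilde_mem: "(p,q,r) \<in> Btilde (a,b,c) \<longleftrightarrow> hdist (a,b,c) (p,q,r) \<le> 1 \<and> (p,q,r) \<in> Dset"
  by (simp add: Btilde_def ball1_def)

lemma inter_empty:
  assumes "a \<noteq> a'" "b \<noteq> b'" "c \<noteq> c'"
  shows "Btilde (a,b,c) \<inter> Btilde (a',b',c') = {}"
proof -
  { fix p q r assume "(p,q,r) \<in> Btilde (a,b,c)" "(p,q,r) \<in> Btilde (a',b',c')"
    hence False using assms unfolding Btilde_mem hdist_simp by (auto split: if_splits) }
  note H = this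
  show ?thesis by (rule set_eqI) (metis H prod_cases3 IntE empty_iff)
qed

lemma inter1:
  assumes "a = a'" "b \<noteq> b'" "c \<noteq> c'"
  shows "Btilde (a,b,c) \<inter> Btilde (a',b',c') = {(a,b,c'),(a,b',c)} \<inter> Dset"
proof -
  { fix p q r
    have H: "(p,q,r) \<in> Btilde (a,b,c) \<inter> Btilde (a',b',c') \<longleftrightarrow> (p,q,r) \<in> {(a,b,c'),(a,b',c)} \<inter> Dset"
    using assms unfolding Btilde_mem hdist_simp IntI Int_iff by (auto split: if_splits) }
  note H = this
  show ?thesis by (rule set_eqI) (metis H prod_cases3)
qed

lemma inter2:
  assumes "a \<noteq> a'" "b = b'" "c \<noteq> c'"
  shows "Btilde (a,b,c) \<inter> Btilde (a',b',c') = {(a,b,c'),(a',b,c)} \<inter> Dset"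
proof -
  { fix p q r
    have H: "(p,q,r) \<in> Btilde (a,b,c) \<inter> Btilde (a',b',c') \<longleftrightarrow> (p,q,r) \<in> {(a,b,c'),(a',b,c)} \<inter> Dset"
    using assms unfolding Btilde_mem hdist_simp IntI Int_iff by (auto split: if_splits) }
  note H = this
  show ?thesis by (rule set_eqI) (metis H prod_cases3)
qed

lemma inter3:
  assumes "a \<noteq> a'" "b \<noteq> b'" "c = c'"
  shows "Btilde (a,b,c) \<inter> Btilde (a',b',c') = {(a,b',c),(a',b,c)} \<inter> Dset"
proof -
  { fix p q r
    have H: "(p,q,r) \<in> Btilde (a,b,c) \<inter> Btilde (a',b',c') \<longleftrightarrow> (p,q,r) \<in> {(a,b',c),(a',b,c)} \<inter> Dset"
    using assms unfolding Btilde_mem hdist_simp IntI Int_iff by (auto split: if_splits) }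
  note H = this
  show ?thesis by (rule set_eqI) (metis H prod_cases3)
qed

lemma card2: "p \<noteq> q \<Longrightarrow> card ({p,q} \<inter> A) = of_bool (p \<in> A) + of_bool (q \<in> A)"
  by (cases "p \<in> A"; cases "q \<in> A") auto


lemma rho_q_sum:
  fixes a b c x y z :: "'a::{field,finite}"
  assumes u: "(a,b,c) \<in> Dset" and v: "(x,y,z) \<in> Dset"
  shows "rho_q (a,b,c) (x,y,z) = (\<Sum>\<mu>\<in>{a/x,b/y,c/z}. card (Btilde (a,b,c) \<inter> Btilde (smul3 \<mu> (x,y,z))))"
proof -
  have Eu: "card (Etilde (a,b,c)) \<noteq> 0"
  proof -
    have "(a,b,c) \<in> Etilde (a,b,c)" using u
      unfolding Etilde_def Eset_def ball1_def by (auto intro!: bexI[of _ 1])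
    thus ?thesis by (auto simp: card_eq_0_iff)
  qed
  have Ev: "card (Etilde (x,y,z)) \<noteq> 0"
  proof -
    have "(x,y,z) \<in> Etilde (x,y,z)" using v
      unfolding Etilde_def Eset_def ball1_def by (auto intro!: bexI[of _ 1])
    thus ?thesis by (auto simp: card_eq_0_iff)
  qed
  have "rho_q (a,b,c) (x,y,z) = (\<Sum>\<mu>\<in>UNIV - {0}. card (Btilde (a,b,c) \<inter> Btilde (smul3 \<mu> (x,y,z))))"
    using Eu Ev by (simp add: rho_q_def)
  also have "\<dots> = (\<Sum>\<mu>\<in>{a/x,b/y,c/z}. card (Btilde (a,b,c) \<inter> Btilde (smul3 \<mu> (x,y,z))))"
  proof (rule sum.mono_neutral_right)
    show "{a/x,b/y,c/z} \<subseteq> UNIV - {0}" using u v by auto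
    show "\<forall>i\<in>UNIV - {0} - {a/x,b/y,c/z}. card (Btilde (a,b,c) \<inter> Btilde (smul3 i (x,y,z))) = 0"
    proof
      fix m assume m: "m \<in> UNIV - {0} - {a/x,b/y,c/z}"
      have "a \<noteq> m*x" "b \<noteq> m*y" "c \<noteq> m*z" using m u v by (auto simp: field_simps)
      thus "card (Btilde (a,b,c) \<inter> Btilde (smul3 m (x,y,z))) = 0"
        by (simp add: inter_empty)
    qed
  qed auto
  finally show ?thesis .
qed

lemma rho_distinct:
  fixes a b c x y z :: "'a::{field,finite}"
  assumes u: "(a,b,c) \<in> Dset" and v: "(x,y,z) \<in> Dset"
    and d: "a/x \<noteq> b/y" "a/x \<noteq> c/z" "b/y \<noteq> c/z"
  shows "rho_q (a,b,c) (x,y,z) = of_bool (a*z \<noteq> b*x) + of_bool (a*y \<noteq> c*x)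
     + (of_bool (b*z \<noteq> a*y) + of_bool (b*x \<noteq> c*y)) + (of_bool (c*y \<noteq> a*z) + of_bool (c*x \<noteq> b*z))"
proof -
  have nz: "x \<noteq> 0" "y \<noteq> 0" "z \<noteq> 0" "a \<noteq> 0" "b \<noteq> 0" "c \<noteq> 0" using u v by auto
  let ?f = "\<lambda>\<mu>. card (Btilde (a,b,c) \<inter> Btilde (smul3 \<mu> (x,y,z)))"
  have "rho_q (a,b,c) (x,y,z) = ?f (a/x) + ?f (b/y) + ?f (c/z)"
    using rho_q_sum[OF u v] d by simp
  moreover have "?f (a/x) = of_bool (a*z \<noteq> b*x) + of_bool (a*y \<noteq> c*x)"
  proof -
    have e: "a = a/x*x" "b \<noteq> a/x*y" "c \<noteq> a/x*z" using d nz by (auto simp: field_simps)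
    have "?f (a/x) = card ({(a,b,a/x*z),(a,a/x*y,c)} \<inter> Dset)"
      using inter1[OF e] by simp
    also have "\<dots> = of_bool ((a,b,a/x*z) \<in> Dset) + of_bool ((a,a/x*y,c) \<in> Dset)"
      using e by (intro card2) auto
    also have "\<dots> = of_bool (a*z \<noteq> b*x) + of_bool (a*y \<noteq> c*x)"
      using u v nz by (auto simp: field_simps)
    finally show ?thesis .
  qed
  moreover have "?f (b/y) = of_bool (b*z \<noteq> a*y) + of_bool (b*x \<noteq> c*y)"
  proof -
    have e: "a \<noteq> b/y*x" "b = b/y*y" "c \<noteq> b/y*z" using d nz by (auto simp: field_simps)
    have "?f (b/y) = card ({(a,b,b/y*z),(b/y*x,b,c)} \<inter> Dset)"
      using inter2[OF e] by simp
    also have "\<dots> = of_bool ((a,b,b/y*z) \<in> Dset) + of_bool ((b/y*x,b,c) \<in> Dset)"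
      using e by (intro card2) auto
    also have "\<dots> = of_bool (b*z \<noteq> a*y) + of_bool (b*x \<noteq> c*y)"
      using u v nz by (auto simp: field_simps)
    finally show ?thesis .
  qed
  moreover have "?f (c/z) = of_bool (c*y \<noteq> a*z) + of_bool (c*x \<noteq> b*z)"
  proof -
    have e: "a \<noteq> c/z*x" "b \<noteq> c/z*y" "c = c/z*z" using d nz by (auto simp: field_simps)
    have "?f (c/z) = card ({(a,c/z*y,c),(c/z*x,b,c)} \<inter> Dset)"
      using inter3[OF e] by simp
    also have "\<dots> = of_bool ((a,c/z*y,c) \<in> Dset) + of_bool ((c/z*x,b,c) \<in> Dset)"
      using e by (intro card2) auto
    also have "\<dots> = of_bool (c*y \<noteq> a*z) + of_bool (c*x \<noteq> b*z)"
      using u v nz by (auto simp: field_simps)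
    finally show ?thesis .
  qed
  ultimately show ?thesis by simp
qed


lemma close_ge2:
  fixes a b c p q r :: "'a::{field,finite}"
  assumes u: "(a,b,c) \<in> Dset" and w: "(p,q,r) \<in> Dset"
    and h: "hdist (a,b,c) (p,q,r) \<le> 1" and q5: "card (UNIV::'a set) \<ge> 5"
  shows "card (Btilde (a,b,c) \<inter> Btilde (p,q,r)) \<ge> 2"
proof (cases "(a,b,c) = (p,q,r)")
  case False
  have "{(a,b,c),(p,q,r)} \<subseteq> Btilde (a,b,c) \<inter> Btilde (p,q,r)"
    using u w h by (auto simp: Btilde_def ball1_def hdist_def split: if_splits)
  from card_mono[OF _ this] False show ?thesis by simp
next
  case True
  have "card {0,a,b,c} \<le> 4" by (rule order_trans[OF card_insert_le_m1]) (auto simp: card_insert_le_m1 intro!: order_trans[OF card_insert_le_m1])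
  then have "{0,a,b,c} \<noteq> UNIV" using q5 by auto
  then obtain t where t: "t \<notin> {0,a,b,c}" by auto
  have "{(a,b,c),(a,b,t)} \<subseteq> Btilde (a,b,c) \<inter> Btilde (p,q,r)"
    using u t True by (auto simp: Btilde_def ball1_def hdist_def)
  moreover have "card {(a,b,c),(a,b,t)} = 2" using t by auto
  ultimately show ?thesis using card_mono[of "Btilde (a,b,c) \<inter> Btilde (p,q,r)" "{(a,b,c),(a,b,t)}"] by simp
qed

lemma rho_nondistinct:
  fixes a b c x y z :: "'a::{field,finite}"
  assumes u: "(a,b,c) \<in> Dset" and v: "(x,y,z) \<in> Dset" and q5: "card (UNIV::'a set) \<ge> 5"
    and d: "\<not> (a/x \<noteq> b/y \<and> a/x \<noteq> c/z \<and> b/y \<noteq> c/z)"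
  shows "rho_q (a,b,c) (x,y,z) \<ge> 2"
proof -
  have nz: "x \<noteq> 0" "y \<noteq> 0" "z \<noteq> 0" "a \<noteq> 0" "b \<noteq> 0" "c \<noteq> 0" using u v by auto
  let ?f = "\<lambda>\<mu>. card (Btilde (a,b,c) \<inter> Btilde (smul3 \<mu> (x,y,z)))"
  obtain m where m: "m \<in> {a/x,b/y,c/z}" "hdist (a,b,c) (smul3 m (x,y,z)) \<le> 1"
  proof -
    consider "a/x = b/y" | "a/x = c/z" | "b/y = c/z" using d by blast
    thus thesis
    proof cases
      case 1 show thesis by (rule that[of "a/x"]) (use 1 nz in \<open>auto simp: field_simps\<close>)
    next
      case 2 show thesis by (rule that[of "a/x"]) (use 2 nz in \<open>auto simp: field_simps\<close>)
    next
      case 3 show thesis by (rule that[of "b/y"]) (use 3 nz in \<open>auto simp: field_simps\<close>)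
    qed
  qed
  have mnz: "m \<noteq> 0" using m(1) nz by auto
  have wD: "(m*x, m*y, m*z) \<in> Dset" using v mnz by auto
  have "2 \<le> ?f m" using close_ge2[OF u wD _ q5] m(2) by simp
  also have "\<dots> \<le> (\<Sum>\<mu>\<in>{a/x,b/y,c/z}. ?f \<mu>)"
    by (rule member_le_sum) (use m in auto)
  finally show ?thesis using rho_q_sum[OF u v] by simp
qed


lemma six_to_cube:
  fixes a b c x y z :: "'a::field"
  assumes nz: "x \<noteq> 0" "y \<noteq> 0" "z \<noteq> 0" "a \<noteq> 0" and xy: "x \<noteq> y"
    and e: "a*z = b*x" "a*y = c*x" "b*z = a*y" "c*y = a*z"
  shows "\<exists>w::'a. w^3 = 1 \<and> w \<noteq> 1"
proof -
  have "a*(x*y) = a*(z*z)"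
  proof -
    have "a*(x*y) = x*(b*z)" using e(3) by (simp add: algebra_simps)
    also have "\<dots> = z*(b*x)" by (simp add: algebra_simps)
    also have "\<dots> = a*(z*z)" using e(1) by (simp add: algebra_simps)
    finally show ?thesis .
  qed
  hence h1: "x*y = z*z" using nz by simp
  have "a*(y*y) = a*(x*z)"
  proof -
    have "a*(y*y) = y*(c*x)" using e(2) by (simp add: algebra_simps)
    also have "\<dots> = x*(c*y)" by (simp add: algebra_simps)
    also have "\<dots> = a*(x*z)" using e(4) by (simp add: algebra_simps)
    finally show ?thesis .
  qed
  hence h2: "y*y = x*z" using nz by simp
  have "(y*z)*(y*z) = (y*z)*(x*x)"
  proof -
    have "(y*z)*(y*z) = (y*y)*(z*z)" by (simp add: algebra_simps)
    also have "\<dots> = (x*z)*(x*y)" using h1 h2 by simp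
    finally show ?thesis by (simp add: algebra_simps)
  qed
  hence h3: "y*z = x*x" using nz by simp
  have "y^3 = x^3"
  proof -
    have "y^3 = x*(y*z)" using h2 by (simp add: power3_eq_cube algebra_simps)
    thus ?thesis using h3 by (simp add: power3_eq_cube)
  qed
  hence "(y/x)^3 = 1" "y/x \<noteq> 1" using nz xy by (auto simp: power_divide)
  thus ?thesis by blast
qed

lemma bool6:
  assumes "(of_bool A + of_bool B + (of_bool C + of_bool D) + (of_bool E + of_bool F) :: nat) < 2"
    "A \<Longrightarrow> B \<or> C \<or> D \<or> E \<or> F" "B \<Longrightarrow> A \<or> C \<or> D \<or> E \<or> F"
  shows "\<not>A \<and> \<not>B"
  using assms by (cases A; cases B; cases C; cases D; cases E; cases F) auto

lemma distinct_ge2_or_cube: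
  fixes a b c x y z :: "'a::{field,finite}"
  assumes u: "(a,b,c) \<in> Dset" and v: "(x,y,z) \<in> Dset"
    and d: "a/x \<noteq> b/y" "a/x \<noteq> c/z" "b/y \<noteq> c/z"
  shows "rho_q (a,b,c) (x,y,z) \<ge> 2 \<or> (\<exists>w::'a. w^3 = 1 \<and> w \<noteq> 1)"
proof (cases "rho_q (a,b,c) (x,y,z) \<ge> 2")
  case True then show ?thesis by simp
next
  case False
  hence lt: "rho_q (a,b,c) (x,y,z) < 2" by simp
  note L = lt[unfolded rho_distinct[OF u v d]]
  have e1: "a*z = b*x \<and> a*y = c*x"
    by (rule bool6[OF L, simplified]; auto)
  have L2: "(of_bool (b*z \<noteq> a*y) + of_bool (c*y \<noteq> a*z) + (of_bool (b*x \<noteq> c*y) + of_bool (c*x \<noteq> b*z)) + (of_bool (a*z \<noteq> b*x) + of_bool (a*y \<noteq> c*x)) :: nat) < 2"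
    using L by simp
  have e2: "b*z = a*y \<and> c*y = a*z"
    by (rule bool6[OF L2, simplified]; auto)
  show ?thesis
    using six_to_cube[where a=a and b=b and c=c and x=x and y=y and z=z] u v e1 e2 by auto
qed

lemma witness0:
  fixes w :: "'a::{field,finite}"
  assumes w: "w^3 = 1" "w \<noteq> 1"
  shows "(1, w^2, w) \<in> Dset \<and> (1, w, w^2) \<in> Dset \<and> rho_q (1, w^2, w) (1, w, w^2) = 0"
proof -
  have w0: "w \<noteq> 0" using w by auto
  have w6: "w * w^2 = w^3" by (simp add: power2_eq_square power3_eq_cube mult.assoc)
  have w5: "w * w^2 = 1" using w6 w(1) by simp
  have w2: "w^2 \<noteq> 1" using w5 w(2) by (metis mult_1_right)
  have w3: "w^2 \<noteq> w"
  proof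
    assume "w^2 = w"
    hence "w * w = w * 1" by (simp add: power2_eq_square)
    thus False using w0 w(2) by simp
  qed
  have w7: "w^2 * w^2 = w * (w * w^2)" by (simp add: power2_eq_square mult.assoc)
  have w4: "w^2 * w^2 = w" unfolding w7 w5 by simp
  have u: "(1, w^2, w) \<in> Dset" and v: "(1, w, w^2) \<in> Dset" using w w0 w2 w3 by auto
  have r1: "w^2 / w = w" using w0 by (simp add: power2_eq_square)
  have r2: "w / w^2 = w^2" using w0 w4 by (simp add: divide_eq_eq)
  have d: "1/1 \<noteq> w^2/w" "1/1 \<noteq> w/w^2" "w^2/w \<noteq> w/w^2" unfolding r1 r2 using w w2 w3 by auto
  have e: "w * w = w^2" "w^2 * w^2 = 1 * w" using w4 by (simp_all add: power2_eq_square)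
  show ?thesis unfolding rho_distinct[OF u v d] using e u v by simp
qed

lemma witness2:
  fixes t :: "'a::{field,finite}"
  assumes t: "t \<noteq> 0" "t \<noteq> 1" "t \<noteq> -1" "t^3 \<noteq> 1"
  shows "(1, t, 1/t) \<in> Dset \<and> (1, t^2, t) \<in> Dset \<and> rho_q (1, t, 1/t) (1, t^2, t) = 2"
proof -
  have t2: "t^2 \<noteq> 1" using t(2,3) by (simp add: power2_eq_square square_eq_1_iff)
  have t3: "t^2 \<noteq> t"
  proof
    assume "t^2 = t"
    hence "t * t = t * 1" by (simp add: power2_eq_square)
    thus False using t by simp
  qed
  have t4: "1/t \<noteq> t"
  proof
    assume "1/t = t"
    hence "1 = t * t" using t(1) by (simp add: divide_eq_eq)
    thus False using t2 by (simp add: power2_eq_square)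
  qed
  have t5: "1/t \<noteq> 1" using t(2) by simp
  have u: "(1, t, 1/t) \<in> Dset" using t t4 t5 by auto
  have v: "(1, t^2, t) \<in> Dset" using t t2 t3 by auto
  have r1: "t/t^2 = 1/t" using t(1) by (simp add: power2_eq_square)
  have r2: "(1/t)/t = 1/t^2" by (simp add: power2_eq_square)
  have d: "1/1 \<noteq> t/t^2" "1/1 \<noteq> (1/t)/t" "t/t^2 \<noteq> (1/t)/t"
    unfolding r1 r2 using t2 t3 t5 by auto
  have e1: "1/t * t^2 = t" using t(1) by (simp add: power2_eq_square)
  have e2: "1/t * 1 \<noteq> t * t"
  proof
    assume "1/t * 1 = t * t"
    hence "1 = t*(t*t)" using t(1) by (simp add: divide_eq_eq mult.assoc)
    thus False using t(4) by (simp add: power3_eq_cube mult.assoc)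
  qed
  have f: "(1*t \<noteq> t*1) = False" "(1*t^2 \<noteq> 1/t*1) = True" "(t*t \<noteq> 1*t^2) = False"
    "(t*1 \<noteq> 1/t*t^2) = False" "(1/t*t^2 \<noteq> 1*t) = False" "(1/t*1 \<noteq> t*t) = True"
    using e1 e2 by (simp_all add: power2_eq_square)
  show ?thesis unfolding rho_distinct[OF u v d] f using u v by simp
qed


lemma fermat_ff:
  fixes a :: "'a::{field,finite}"
  assumes a: "a \<noteq> 0"
  shows "a ^ (card (UNIV :: 'a set) - 1) = 1"
proof -
  let ?N = "UNIV - {0::'a}"
  have cN: "card ?N = card (UNIV :: 'a set) - 1" by (simp add: card_Diff_singleton)
  have bij: "bij_betw (\<lambda>x. a * x) ?N ?N"
  proof -
    have "inj_on (\<lambda>x. a * x) ?N" using a by (auto simp: inj_on_def)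
    moreover have "(\<lambda>x. a * x) ` ?N = ?N"
    proof
      show "(\<lambda>x. a * x) ` ?N \<subseteq> ?N" using a by auto
      show "?N \<subseteq> (\<lambda>x. a * x) ` ?N"
      proof
        fix y assume y: "y \<in> ?N"
        have "y = a * (y / a)" using a by simp
        moreover have "y / a \<in> ?N" using a y by simp
        ultimately show "y \<in> (\<lambda>x. a * x) ` ?N" by blast
      qed
    qed
    ultimately show ?thesis by (simp add: bij_betw_def)
  qed
  have "prod id ?N = prod (\<lambda>x. a * x) ?N"
    using prod.reindex_bij_betw[OF bij, of id] by simp
  also have "\<dots> = a ^ card ?N * prod id ?N"
    by (simp add: prod.distrib)
  finally have "1 * prod id ?N = a ^ card ?N * prod id ?N" by simp
  moreover have "prod id ?N \<noteq> 0" by simp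
  ultimately have "a ^ card ?N = 1" by (metis mult_right_cancel)
  thus ?thesis using cN by simp
qed

lemma cube_iff:
  assumes q4: "card (UNIV :: 'a::{field,finite} set) \<ge> 4"
  shows "(\<exists>w::'a. w^3 = 1 \<and> w \<noteq> 1) \<longleftrightarrow> 3 dvd (card (UNIV :: 'a set) - 1)"
proof
  assume "\<exists>w::'a. w^3 = 1 \<and> w \<noteq> 1"
  then obtain w :: 'a where w: "w^3 = 1" "w \<noteq> 1" by blast
  have w0: "w \<noteq> 0" using w by auto
  let ?n = "card (UNIV :: 'a set) - 1"
  have "w ^ ?n = w ^ (3 * (?n div 3) + ?n mod 3)" by (simp only: mult_div_mod_eq)
  also have "\<dots> = (w^3) ^ (?n div 3) * w ^ (?n mod 3)" by (simp only: power_add power_mult)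
  also have "\<dots> = w ^ (?n mod 3)" using w(1) by simp
  finally have wm: "w ^ (?n mod 3) = 1" using fermat_ff[OF w0] by simp
  have "?n mod 3 < 3" by simp
  hence c: "?n mod 3 = 0 \<or> ?n mod 3 = 1 \<or> ?n mod 3 = 2" by linarith
  have c1: "?n mod 3 \<noteq> 1"
  proof
    assume "?n mod 3 = 1"
    hence "w = 1" using wm by simp
    thus False using w(2) by simp
  qed
  have c2: "?n mod 3 \<noteq> 2"
  proof
    assume "?n mod 3 = 2"
    hence "w^2 = 1" using wm by simp
    hence "w^3 = w" by (simp add: power3_eq_cube power2_eq_square)
    thus False using w by simp
  qed
  have "?n mod 3 = 0" using c c1 c2 by blast
  thus "3 dvd ?n" by (simp add: dvd_eq_mod_eq_0)
next
  assume d: "3 dvd (card (UNIV :: 'a set) - 1)"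
  define m where "m = (card (UNIV :: 'a set) - 1) div 3"
  have nm: "card (UNIV :: 'a set) - 1 = 3 * m" using d unfolding m_def by simp
  have m1: "m \<ge> 1" using nm q4 by linarith
  let ?p = "monom (1::'a) m - 1"
  have p0: "?p \<noteq> 0"
  proof
    assume "?p = 0"
    hence "poly ?p 0 = 0" by simp
    thus False using m1 by (simp add: poly_monom power_0_left)
  qed
  have degp: "degree ?p \<le> m"
    using degree_diff_le[of "monom (1::'a) m" m 1] degree_monom_le[of "1::'a" m] by simp
  have cr: "card {x. poly ?p x = 0} \<le> m" using card_poly_roots_bound[OF p0] degp by linarith
  have cN: "card (UNIV - {0::'a}) = 3 * m" using nm by (simp add: card_Diff_singleton)
  have "\<not> (UNIV - {0::'a}) \<subseteq> {x. poly ?p x = 0}"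
  proof
    assume "(UNIV - {0::'a}) \<subseteq> {x. poly ?p x = 0}"
    from card_mono[OF poly_roots_finite[OF p0] this] have "3 * m \<le> m" using cN cr by linarith
    thus False using m1 by linarith
  qed
  then obtain a :: 'a where a: "a \<noteq> 0" "poly ?p a \<noteq> 0" by blast
  have am: "a ^ m \<noteq> 1" using a(2) by (simp add: poly_monom)
  have "(a ^ m) ^ 3 = a ^ (3 * m)" by (simp only: power_mult mult.commute)
  also have "\<dots> = 1" using fermat_ff[OF a(1)] nm by simp
  finally show "\<exists>w::'a. w^3 = 1 \<and> w \<noteq> 1" using am by blast
qed


theorem theorem17:
  assumes "card (UNIV :: 'a::{field,finite} set) \<ge> 4"
  shows "rho TYPE('a) = (if 3 dvd (card (UNIV :: 'a set) - 1) then 0 else 2)"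
proof -
  let ?S = "(\<lambda>(u,v). rho_q u v) ` (Dset \<times> (Dset :: 'a vec3 set))"
  have rS: "rho TYPE('a) = Min ?S"
    unfolding rho_def by (rule arg_cong[where f=Min]) (auto simp del: Dset_iff; blast)
  have fS: "finite ?S" by simp
  show ?thesis
  proof (cases "3 dvd (card (UNIV :: 'a set) - 1)")
    case True
    then obtain w :: 'a where w: "w^3 = 1" "w \<noteq> 1" using cube_iff[OF assms] by blast
    note W = witness0[OF w]
    have "0 \<in> ?S" using W by (force intro!: image_eqI[where x="((1, w^2, w), (1, w, w^2))"])
    hence "Min ?S = 0" by (intro Min_eqI[OF fS]) auto
    thus ?thesis using True rS by simp
  next
    case False
    hence nc: "\<not> (\<exists>w::'a. w^3 = 1 \<and> w \<noteq> 1)" using cube_iff[OF assms] by blast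
    have "card (UNIV :: 'a set) \<noteq> 4" using False by auto
    hence q5: "card (UNIV :: 'a set) \<ge> 5" using assms by linarith
    have c3: "card {0, 1, -1::'a} \<le> 3" using card_length[of "[0, 1, -1::'a]"] by simp
    have "{0, 1, -1::'a} \<noteq> UNIV"
    proof
      assume "{0, 1, -1::'a} = UNIV"
      hence "card (UNIV :: 'a set) \<le> 3" using c3 by simp
      thus False using q5 by simp
    qed
    then obtain t :: 'a where t: "t \<noteq> 0" "t \<noteq> 1" "t \<noteq> -1" by auto
    have t3: "t^3 \<noteq> 1" using nc t by blast
    note W = witness2[OF t t3]
    have "2 \<in> ?S" using W by (force intro!: image_eqI[where x="((1, t, 1/t), (1, t^2, t))"])
    moreover have "\<And>y. y \<in> ?S \<Longrightarrow> 2 \<le> y"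
    proof -
      fix y assume "y \<in> ?S"
      then obtain a b c x y' z :: 'a where u: "(a,b,c) \<in> Dset" and v: "(x,y',z) \<in> Dset"
        and yy: "y = rho_q (a,b,c) (x,y',z)" by auto
      show "2 \<le> y"
      proof (cases "a/x \<noteq> b/y' \<and> a/x \<noteq> c/z \<and> b/y' \<noteq> c/z")
        case True
        thus ?thesis using distinct_ge2_or_cube[OF u v] nc yy by blast
      next
        case False
        thus ?thesis using rho_nondistinct[OF u v q5 False] yy by simp
      qed
    qed
    ultimately have "Min ?S = 2" by (intro Min_eqI[OF fS]) auto
    thus ?thesis using False rS by simp
  qed
qed

end
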